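(* Let $k\ge0$, $K=k+6$, $M=K/\gcd(K,60)$. Let $(a_0;a_1,a_2)$ be integers with $a_0+a_1+a_2=k+3$ such that $C(a_0;a_1,a_2)=J^i(a_0;a_1,a_2)$ for some $i\in\{0,1,2\}$ (i.e. two of $a_0,a_1,a_2$ coincide). Then $D(a_1,a_2)\equiv 0\pmod M$; equivalently, for the corresponding $G_2^{(1)}$-weight $b'$ with $Cb'=J^ib'$, $\dim_{G_2}(b')\equiv0\pmod M$.
   Context: For integers $a_1,a_2$, $D(a_1,a_2)=\frac{1}{120}(a_2-a_1)(a_2+1)(2a_2+a_1+3)(a_2+a_1+2)(a_2+2a_1+3)(a_1+1)$ (the formal $G_2$ Weyl dimension, an integer). Integral level-$(k+2)$ $G_2^{(1)}$-weights $(c_0;c_1,c_2)$ (integers, $c_0+2c_1+c_2=k+2$) correspond to integer triples $(a_0;a_1,a_2)$ with $a_0+a_1+a_2=k+3$ via $(a_0;a_1,a_2)=(c_0;c_1,c_1+c_2+1)$, and $\dim_{G_2}(c)=D(a_1,a_2)$. On these triples, $C(a_0;a_1,a_2)=(a_0;a_2,a_1)$ and $J(a_0;a_1,a_2)=(a_2;a_0,a_1)$; on $G_2$ labels $C(c_0;c_1,c_2)=(c_0;c_1+c_2+1,-c_2-2)$ and $J(c_0;c_1,c_2)=(c_1+c_2+1;c_0,c_1-c_0-1)$. *)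

theory Defs
  imports Main "HOL.Rat"
begin

text \<open>Formal G2 Weyl dimension, as a rational number (it is in fact an integer).\<close>
definition D :: "int \<Rightarrow> int \<Rightarrow> rat" where
  "D a1 a2 = (1/120) * of_int ((a2 - a1) * (a2 + 1) * (2*a2 + a1 + 3) * (a2 + a1 + 2)
                               * (a2 + 2*a1 + 3) * (a1 + 1))"

definition Cmap :: "int \<times> int \<times> int \<Rightarrow> int \<times> int \<times> int" where
  "Cmap t = (case t of (a0, a1, a2) \<Rightarrow> (a0, a2, a1))"

definition Jmap :: "int \<times> int \<times> int \<Rightarrow> int \<times> int \<times> int" where
  "Jmap t = (case t of (a0, a1, a2) \<Rightarrow> (a2, a0, a1))"

end

theory Submission
  imports Defs "HOL-Number_Theory.Cong"
begin

definition P :: "int \<Rightarrow> int \<Rightarrow> int" where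
  "P a K = (3*a - K + 3) * (a + 1) * (K - 1 - a) * (2*K - 3 - 3*a) * (K - 2 - 2*a)"

lemma P_mod: "P a K mod m = P (a mod m) (K mod m) mod m"
proof -
  have a: "[a mod m = a] (mod m)" "[K mod m = K] (mod m)" by (simp_all add: cong_def)
  have "[P (a mod m) (K mod m) = P a K] (mod m)"
    unfolding P_def by (intro cong_mult cong_add cong_diff cong_refl a)
  then show ?thesis by (simp add: cong_def)
qed

lemma P3: "\<not> 3 dvd K \<Longrightarrow> 3 dvd P a K"
proof -
  assume h: "\<not> 3 dvd K"
  have "K mod 3 = 1 \<or> K mod 3 = 2" using h by presburger
  moreover have "a mod 3 = 0 \<or> a mod 3 = 1 \<or> a mod 3 = 2" by presburger
  ultimately have "P (a mod 3) (K mod 3) mod 3 = 0" unfolding P_def by (elim disjE) simp_all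
  then show ?thesis using P_mod[of a K 3] by presburger
qed

lemma P5: "\<not> 5 dvd K \<Longrightarrow> 5 dvd P a K"
proof -
  assume h: "\<not> 5 dvd K"
  have "K mod 5 = 1 \<or> K mod 5 = 2 \<or> K mod 5 = 3 \<or> K mod 5 = 4" using h by presburger
  moreover have "a mod 5 = 0 \<or> a mod 5 = 1 \<or> a mod 5 = 2 \<or> a mod 5 = 3 \<or> a mod 5 = 4" by presburger
  ultimately have "P (a mod 5) (K mod 5) mod 5 = 0" unfolding P_def by (elim disjE) simp_all
  then show ?thesis using P_mod[of a K 5] by presburger
qed

lemma P8a: "odd K \<Longrightarrow> 8 dvd P a K"
proof -
  assume h: "odd K"
  have "K mod 8 = 1 \<or> K mod 8 = 3 \<or> K mod 8 = 5 \<or> K mod 8 = 7" using h by presburger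
  moreover have "a mod 8 = 0 \<or> a mod 8 = 1 \<or> a mod 8 = 2 \<or> a mod 8 = 3 \<or> a mod 8 = 4 \<or> a mod 8 = 5 \<or> a mod 8 = 6 \<or> a mod 8 = 7" by presburger
  ultimately have "P (a mod 8) (K mod 8) mod 8 = 0" unfolding P_def by (elim disjE) simp_all
  then show ?thesis using P_mod[of a K 8] by presburger
qed

lemma P8b: "K mod 4 = 2 \<Longrightarrow> 4 dvd P a K"
proof -
  assume h: "K mod 4 = 2"
  have "a mod 4 = 0 \<or> a mod 4 = 1 \<or> a mod 4 = 2 \<or> a mod 4 = 3" by presburger
  then have "P (a mod 4) (K mod 4) mod 4 = 0" unfolding P_def h by (elim disjE) simp_all
  then show ?thesis using P_mod[of a K 4] by presburger
qed

lemma P8c: "2 dvd P a K"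
proof -
  have "K mod 2 = 0 \<or> K mod 2 = 1" by presburger
  moreover have "a mod 2 = 0 \<or> a mod 2 = 1" by presburger
  ultimately have "P (a mod 2) (K mod 2) mod 2 = 0" unfolding P_def by (elim disjE) simp_all
  then show ?thesis using P_mod[of a K 2] by presburger
qed

lemma key: "120 dvd gcd K 60 * P a K"
proof -
  let ?g = "gcd K 60"
  have d3: "3 dvd ?g * P a K"
  proof (cases "3 dvd K")
    case True then have "3 dvd ?g" by simp
    then show ?thesis by simp
  next
    case False then show ?thesis using P3 by simp
  qed
  have d5: "5 dvd ?g * P a K"
  proof (cases "5 dvd K")
    case True then have "5 dvd ?g" by simp
    then show ?thesis by simp
  next
    case False then show ?thesis using P5 by simp
  qed
  have d8: "8 dvd ?g * P a K"
  proof (cases "4 dvd K")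
    case True then have "4 dvd ?g" by simp
    then show ?thesis using mult_dvd_mono[OF _ P8c[of a K], of 4 ?g] by simp
  next
    case F: False
    show ?thesis
    proof (cases "2 dvd K")
      case True then have "2 dvd ?g" by simp
      moreover have "K mod 4 = 2" using True F by presburger
      ultimately show ?thesis using mult_dvd_mono[OF _ P8b[of K a], of 2 ?g] by simp
    next
      case False then show ?thesis using P8a by simp
    qed
  qed
  show ?thesis using d3 d5 d8 by presburger
qed

lemma i1: assumes "a1 = K - 3 - 2*a2" shows
  "(a2 - a1) * (a2 + 1) * (2*a2 + a1 + 3) * (a2 + a1 + 2) * (a2 + 2*a1 + 3) * (a1 + 1) = K * P a2 K"
proof -
  have "a2 - a1 = 3*a2 - K + 3" "2*a2 + a1 + 3 = K" "a2 + a1 + 2 = K - 1 - a2"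
       "a2 + 2*a1 + 3 = 2*K - 3 - 3*a2" "a1 + 1 = K - 2 - 2*a2" using assms by simp_all
  then show ?thesis unfolding P_def by (simp only:) (simp only: mult_ac)
qed
lemma i2: assumes "a2 = K - 3 - 2*a1" shows
  "(a2 - a1) * (a2 + 1) * (2*a2 + a1 + 3) * (a2 + a1 + 2) * (a2 + 2*a1 + 3) * (a1 + 1) = K * (- P a1 K)"
proof -
  have "a2 - a1 = - (3*a1 - K + 3)" "a2 + 1 = K - 2 - 2*a1" "2*a2 + a1 + 3 = 2*K - 3 - 3*a1" "a2 + a1 + 2 = K - 1 - a1"
       "a2 + 2*a1 + 3 = K" using assms by simp_all
  then show ?thesis unfolding P_def by (simp only:) (simp only: mult_ac minus_mult_left minus_mult_right)
qed

lemma final: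
  assumes "120 dvd gcd K 60 * Q" "K > 0"
  shows "\<exists>n::int. (1/120::rat) * of_int (K * Q) = of_int ((K div gcd K 60) * n)"
proof -
  obtain c where c: "gcd K 60 * Q = 120 * c" using assms(1) by blast
  have "K = (K div gcd K 60) * gcd K 60" by simp
  then have "K * Q = (K div gcd K 60) * 120 * c" using c by (metis mult.assoc)
  then have "(1/120::rat) * of_int (K * Q) = of_int ((K div gcd K 60) * c)" by simp
  then show ?thesis by blast
qed

lemma c0: "Cmap (a0, a1, a2) = (a0,a2,a1)" by (simp add: Cmap_def)
lemma j2: "(Jmap ^^ 2) (a0, a1, a2) = (a1,a2,a0)" by (simp add: Jmap_def numeral_2_eq_2)
lemma j1': "(Jmap ^^ 1) (a0, a1, a2) = (a2,a0,a1)" by (simp add: Jmap_def)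
lemma j0: "(Jmap ^^ 0) (a0, a1, a2) = (a0,a1,a2)" by simp
lemma cs: assumes "i \<in> {0, 1, 2::nat}"
    and "Cmap (a0, a1, a2) = (Jmap ^^ i) (a0, a1, a2)" shows "a1 = a2 \<or> a0 = a2 \<or> a0 = a1"
proof -
  have "i = 0 \<or> i = 1 \<or> i = 2" using assms(1) by simp
  moreover
  { assume h: "i = 0" have "(a0,a2,a1) = (a0,a1,a2)" using assms(2) unfolding h c0 j0 .
    then have "fst (snd (a0,a2,a1)) = fst (snd (a0,a1,a2))" by (rule arg_cong)
    then have "a2 = a1" by (simp only: fst_conv snd_conv)
    then have ?thesis by (rule disjI1[OF sym]) }
  moreover
  { assume h: "i = 1" have "(a0,a2,a1) = (a2,a0,a1)" using assms(2) unfolding h c0 j1' .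
    then have "fst (a0,a2,a1) = fst (a2,a0,a1)" by (rule arg_cong)
    then have "a0 = a2" by (simp only: fst_conv snd_conv)
    then have ?thesis by (intro disjI2 disjI1) }
  moreover
  { assume h: "i = 2" have "(a0,a2,a1) = (a1,a2,a0)" using assms(2) unfolding h c0 j2 .
    then have "fst (a0,a2,a1) = fst (a1,a2,a0)" by (rule arg_cong)
    then have "a0 = a1" by (simp only: fst_conv snd_conv)
    then have ?thesis by (intro disjI2) }
  ultimately show ?thesis by blast
qed

theorem theorem3:
  fixes k :: nat and a0 a1 a2 :: int and i :: nat
  assumes "a0 + a1 + a2 = int k + 3"
    and "i \<in> {0, 1, 2}"
    and "Cmap (a0, a1, a2) = (Jmap ^^ i) (a0, a1, a2)"
  shows "\<exists>n::int. D a1 a2 = of_int ((int (k + 6) div gcd (int (k + 6)) 60) * n)"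
proof -
  define K where "K = int (k + 6)"
  have Kp: "K > 0" unfolding K_def by simp
  have sum: "a0 + a1 + a2 = K - 3" using assms(1) unfolding K_def by simp
  have cases: "a1 = a2 \<or> a0 = a2 \<or> a0 = a1"
    using cs[OF assms(2,3)] .
  have "\<exists>Q. (a2 - a1) * (a2 + 1) * (2*a2 + a1 + 3) * (a2 + a1 + 2) * (a2 + 2*a1 + 3) * (a1 + 1) = K * Q
          \<and> 120 dvd gcd K 60 * Q"
  proof -
    { assume h: "a1 = a2"
      have z: "a2 - a1 = 0" using h by simp
      have "(a2 - a1) * (a2 + 1) * (2*a2 + a1 + 3) * (a2 + a1 + 2) * (a2 + 2*a1 + 3) * (a1 + 1) = K * 0"
        by (simp only: z mult_zero_left mult_zero_right)
      moreover have "120 dvd gcd K 60 * (0::int)" by simp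
      ultimately have ?thesis by blast }
    moreover
    { assume e: "a0 = a2"
      then have "a1 = K - 3 - 2*a2" using sum by simp
      then have "(a2 - a1) * (a2 + 1) * (2*a2 + a1 + 3) * (a2 + a1 + 2) * (a2 + 2*a1 + 3) * (a1 + 1) = K * P a2 K"
        by (rule i1)
      then have ?thesis using key[of K a2] by blast }
    moreover
    { assume e: "a0 = a1"
      then have "a2 = K - 3 - 2*a1" using sum by simp
      then have "(a2 - a1) * (a2 + 1) * (2*a2 + a1 + 3) * (a2 + a1 + 2) * (a2 + 2*a1 + 3) * (a1 + 1) = K * (- P a1 K)"
        by (rule i2)
      moreover have "120 dvd gcd K 60 * (- P a1 K)" using key[of K a1] by simp
      ultimately have ?thesis by blast }
    ultimately show ?thesis using cases by blast
  qed
  then obtain Q where Q: "(a2 - a1) * (a2 + 1) * (2*a2 + a1 + 3) * (a2 + a1 + 2) * (a2 + 2*a1 + 3) * (a1 + 1) = K * Q"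
    "120 dvd gcd K 60 * Q" by blast
  have DQ: "D a1 a2 = (1/120) * of_int (K * Q)" by (simp only: D_def Q(1))
  obtain n where n: "(1/120::rat) * of_int (K * Q) = of_int ((K div gcd K 60) * n)"
    using final[OF Q(2) Kp] by blast
  have "D a1 a2 = of_int ((K div gcd K 60) * n)" using DQ n by (rule trans)
  then have "\<exists>n. D a1 a2 = of_int ((K div gcd K 60) * n)" by (rule exI)
  then show ?thesis by (simp only: K_def)
qed

end
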